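(* Let $(s_n)_{n\in\mathbb{Z}}$, $(t_n)_{n\in\mathbb{Z}}$ be strictly increasing sequences of reals with $\lim_{n\to-\infty}s_n=0$, $\lim_{n\to+\infty}s_n=\lim_{n\to-\infty}t_n=1$, $\lim_{n\to+\infty}t_n=2$, and let $X=\{0,1,2\}\cup\{s_n:n\in\mathbb{Z}\}\cup\{t_n:n\in\mathbb{Z}\}\subset[0,2]$ with the usual metric. Define $f\colon X\to X$ by $f(y)=y$ for $y\in\{0,1,2\}$, $f(s_n)=s_{n+1}$, $f(t_n)=t_{n+1}$. Then $f$ is an expansive homeomorphism which has the limit shadowing property but not the shadowing property.
   Context: A homeomorphism $f$ is expansive if there is $e>0$ such that $d(f^n(x),f^n(y))\le e$ for all $n\in\mathbb{Z}$ implies $x=y$. Shadowing property: for every $\epsilon>0$ there is $\delta>0$ such that every sequence $(x_i)_{i\ge0}$ with $d(f(x_i),x_{i+1})\le\delta$ for all $i$ admits $x$ with $d(x_i,f^i(x))\le\epsilon$ for all $i$. Limit shadowing property: every sequence with $\lim_i d(f(x_i),x_{i+1})=0$ admits $y$ with $\lim_i d(x_i,f^i(y))=0$. *)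

theory Defs
  imports "HOL-Analysis.Analysis"
begin

definition iter_int :: "'a set \<Rightarrow> ('a \<Rightarrow> 'a) \<Rightarrow> int \<Rightarrow> 'a \<Rightarrow> 'a" where
  "iter_int X f n = (if n \<ge> 0 then f ^^ nat n else (inv_into X f) ^^ nat (- n))"

definition expansive_on :: "'a::metric_space set \<Rightarrow> ('a \<Rightarrow> 'a) \<Rightarrow> bool" where
  "expansive_on X f \<longleftrightarrow> (\<exists>e>0. \<forall>x\<in>X. \<forall>y\<in>X.
      (\<forall>n::int. dist (iter_int X f n x) (iter_int X f n y) \<le> e) \<longrightarrow> x = y)"

definition shadowing_on :: "'a::metric_space set \<Rightarrow> ('a \<Rightarrow> 'a) \<Rightarrow> bool" where
  "shadowing_on X f \<longleftrightarrow> (\<forall>\<epsilon>>0. \<exists>\<delta>>0. \<forall>xs::nat \<Rightarrow> 'a.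
      (\<forall>i. xs i \<in> X) \<and> (\<forall>i. dist (f (xs i)) (xs (Suc i)) \<le> \<delta>) \<longrightarrow>
      (\<exists>x\<in>X. \<forall>i. dist (xs i) ((f ^^ i) x) \<le> \<epsilon>))"

definition limit_shadowing_on :: "'a::metric_space set \<Rightarrow> ('a \<Rightarrow> 'a) \<Rightarrow> bool" where
  "limit_shadowing_on X f \<longleftrightarrow> (\<forall>xs::nat \<Rightarrow> 'a.
      (\<forall>i. xs i \<in> X) \<and> (\<lambda>i. dist (f (xs i)) (xs (Suc i))) \<longlonglongrightarrow> 0 \<longrightarrow>
      (\<exists>y\<in>X. (\<lambda>i. dist (xs i) ((f ^^ i) y)) \<longlonglongrightarrow> 0))"

definition exX :: "(int \<Rightarrow> real) \<Rightarrow> (int \<Rightarrow> real) \<Rightarrow> real set" where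
  "exX s t = {0, 1, 2} \<union> range s \<union> range t"

definition exf :: "(int \<Rightarrow> real) \<Rightarrow> (int \<Rightarrow> real) \<Rightarrow> real \<Rightarrow> real" where
  "exf s t y = (if y \<in> range s then s ((THE n. s n = y) + 1)
                else if y \<in> range t then t ((THE n. t n = y) + 1)
                else y)"

end

theory Submission imports Defs begin

lemma smono_lt_top:
  fixes u :: "int \<Rightarrow> real"
  assumes "strict_mono u" "(u \<longlongrightarrow> b) at_top"
  shows "u n < b"
proof (rule ccontr)
  assume "\<not> u n < b"
  hence "b < u (n+1)" using assms(1) by (smt (verit) strict_monoD)
  hence "eventually (\<lambda>m. u m < u (n+1)) at_top" using order_tendstoD(2)[OF assms(2)] by blast
  then obtain N where N: "\<forall>m\<ge>N. u m < u (n+1)" by (auto simp: eventually_at_top_linorder)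
  have "u (n+1) \<le> u (max N (n+1))" using assms(1) by (simp add: strict_mono_less_eq)
  moreover have "u (max N (n+1)) < u (n+1)" using N by simp
  ultimately show False by linarith
qed

lemma smono_gt_bot:
  fixes u :: "int \<Rightarrow> real"
  assumes "strict_mono u" "(u \<longlongrightarrow> a) at_bot"
  shows "a < u n"
proof (rule ccontr)
  assume "\<not> a < u n"
  hence "u (n-1) < a" using assms(1) by (smt (verit) strict_monoD)
  hence "eventually (\<lambda>m. u (n - 1) < u m) at_bot" using order_tendstoD(1)[OF assms(2)] by blast
  then obtain N where N: "\<forall>m\<le>N. u (n-1) < u m" by (auto simp: eventually_at_bot_linorder)
  have "u (min N (n-1)) \<le> u (n-1)" using assms(1) by (simp add: strict_mono_less_eq)
  moreover have "u (n-1) < u (min N (n-1))" using N by simp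
  ultimately show False by linarith
qed

lemma smono_fin:
  fixes u :: "int \<Rightarrow> real"
  assumes "strict_mono u" "(u \<longlongrightarrow> a) at_bot" "(u \<longlongrightarrow> b) at_top" "a < a'" "b' < b"
  shows "finite {n. a' \<le> u n \<and> u n \<le> b'}"
proof -
  obtain N1 where N1: "\<forall>m\<le>N1. u m < a'"
    using order_tendstoD(2)[OF assms(2) assms(4)] by (auto simp: eventually_at_bot_linorder)
  obtain N2 where N2: "\<forall>m\<ge>N2. b' < u m"
    using order_tendstoD(1)[OF assms(3) assms(5)] by (auto simp: eventually_at_top_linorder)
  have "{n. a' \<le> u n \<and> u n \<le> b'} \<subseteq> {N1..N2}"
  proof
    fix x assume x: "x \<in> {n. a' \<le> u n \<and> u n \<le> b'}"
    have "\<not> x < N1" using N1[rule_format, of x] x by auto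
    moreover have "\<not> x > N2" using N2[rule_format, of x] x by auto
    ultimately show "x \<in> {N1..N2}" by simp
  qed
  thus ?thesis using finite_subset by blast
qed

lemma iso_of_finite:
  fixes z :: real
  assumes "finite (X \<inter> ball z r)" "r > 0"
  shows "\<exists>\<eta>>0. \<forall>x\<in>X. dist x z < \<eta> \<longrightarrow> x = z"
proof -
  obtain d where d: "d > 0" "\<forall>x\<in>X \<inter> ball z r. x \<noteq> z \<longrightarrow> d \<le> dist z x"
    using finite_set_avoid[OF assms(1), of z] by blast
  show ?thesis
    apply (rule exI[of _ "min r d"]) using d assms(2) by (auto simp: dist_commute)
qed

locale exsys =
  fixes s t :: "int \<Rightarrow> real"
  assumes sm: "strict_mono s" and tm: "strict_mono t"
    and sb: "(s \<longlongrightarrow> 0) at_bot" and st: "(s \<longlongrightarrow> 1) at_top"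
    and tb: "(t \<longlongrightarrow> 1) at_bot" and tt: "(t \<longlongrightarrow> 2) at_top"
begin

abbreviation "X \<equiv> exX s t"
abbreviation "F \<equiv> exf s t"

lemma s_bnd: "0 < s n" "s n < 1"
  using smono_lt_top[OF sm st] smono_gt_bot[OF sm sb] by auto
lemma t_bnd: "1 < t n" "t n < 2"
  using smono_lt_top[OF tm tt] smono_gt_bot[OF tm tb] by auto

lemma s_inj[simp]: "s a = s b \<longleftrightarrow> a = b"
  using sm strict_mono_eq by blast
lemma t_inj[simp]: "t a = t b \<longleftrightarrow> a = b"
  using tm strict_mono_eq by blast
lemma s_less[simp]: "s a < s b \<longleftrightarrow> a < b"
  using sm strict_mono_less by blast
lemma t_less[simp]: "t a < t b \<longleftrightarrow> a < b"
  using tm strict_mono_less by blast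
lemma s_le[simp]: "s a \<le> s b \<longleftrightarrow> a \<le> b"
  using sm strict_mono_less_eq by blast
lemma t_le[simp]: "t a \<le> t b \<longleftrightarrow> a \<le> b"
  using tm strict_mono_less_eq by blast

lemma st_ne: "s a \<noteq> t b" using s_bnd t_bnd
  by (metis order.asym)

lemma nots: "x \<notin> range s" if "x \<ge> 1 \<or> x \<le> 0" for x
proof
  assume "x \<in> range s" then obtain n where "x = s n" by auto
  then show False using s_bnd[of n] that by auto
qed
lemma nott: "x \<notin> range t" if "x \<le> 1 \<or> x \<ge> 2" for x
proof
  assume "x \<in> range t" then obtain n where "x = t n" by auto
  then show False using t_bnd[of n] that by auto
qed

lemma F_s[simp]: "F (s n) = s (n+1)"
  unfolding exf_def by auto
lemma F_t[simp]: "F (t n) = t (n+1)"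
  unfolding exf_def using st_ne by (auto; metis)
lemma F_fix: "x \<in> {0,1,2} \<Longrightarrow> F x = x"
proof -
  assume "x \<in> {0,1,2}"
  hence "\<forall>n. s n \<noteq> x \<and> t n \<noteq> x" using s_bnd t_bnd by (smt (verit) insertE singletonD)
  thus ?thesis unfolding exf_def by auto
qed

lemma X_cases: "x \<in> X \<Longrightarrow> (x = 0 \<Longrightarrow> P) \<Longrightarrow> (x = 1 \<Longrightarrow> P) \<Longrightarrow> (x = 2 \<Longrightarrow> P)
  \<Longrightarrow> (\<And>a. x = s a \<Longrightarrow> P) \<Longrightarrow> (\<And>a. x = t a \<Longrightarrow> P) \<Longrightarrow> P"
  unfolding exX_def by auto

lemma X_s[simp]: "s a \<in> X" and X_t[simp]: "t a \<in> X" and X_012[simp]: "0 \<in> X" "1 \<in> X" "2 \<in> X"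
  unfolding exX_def by auto

lemma X_bnd: "x \<in> X \<Longrightarrow> 0 \<le> x \<and> x \<le> 2"
  by (erule X_cases; (simp; smt (verit) s_bnd t_bnd))

lemma F_ge: "x \<in> X \<Longrightarrow> x \<le> F x"
  by (erule X_cases) (auto simp: F_fix)
lemma F_gt: "x \<in> X \<Longrightarrow> x \<notin> {0,1,2} \<Longrightarrow> x < F x"
  by (erule X_cases) auto


lemma iso: assumes "z \<notin> {0,1,2}" shows "\<exists>\<eta>>0. \<forall>x\<in>X. dist x z < \<eta> \<longrightarrow> x = z"
proof -
  consider "z < 0" | "z > 2" | "0 < z \<and> z < 1" | "1 < z \<and> z < 2" using assms by force
  thus ?thesis
  proof cases
    case 1 show ?thesis
      apply (rule exI[of _ "-z"]) using 1 X_bnd by (force simp: dist_real_def)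
  next
    case 2 show ?thesis
      apply (rule exI[of _ "z - 2"]) using 2 X_bnd by (force simp: dist_real_def) 
  next
    case 3
    define r where "r = min z (1-z) / 2"
    have r: "r > 0" "0 < z - r" "z + r < 1" "r < z" "r < 1 - z" using 3 by (auto simp: r_def min_def field_simps)
    have "X \<inter> ball z r \<subseteq> s ` {n. z - r \<le> s n \<and> s n \<le> z + r}"
    proof
      fix x assume x: "x \<in> X \<inter> ball z r"
      hence xX: "x \<in> X" and d: "\<bar>x - z\<bar> < r" by (auto simp: dist_real_def dist_commute)
      from xX show "x \<in> s ` {n. z - r \<le> s n \<and> s n \<le> z + r}"
      proof (rule X_cases)
        fix a assume "x = t a" thus ?thesis using t_bnd[of a] r d by (auto simp: abs_less_iff)
      qed (use r d in \<open>auto intro: rev_image_eqI simp: abs_less_iff\<close>)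
    qed
    moreover have "finite {n. z - r \<le> s n \<and> s n \<le> z + r}"
      by (rule smono_fin[OF sm sb st]) (use r in auto)
    ultimately have "finite (X \<inter> ball z r)" using finite_subset by blast
    thus ?thesis using iso_of_finite r by blast
  next
    case 4
    define r where "r = min (z - 1) (2-z) / 2"
    have r: "r > 0" "1 < z - r" "z + r < 2" "r < z - 1" "r < 2 - z" using 4 by (auto simp: r_def min_def field_simps)
    have "X \<inter> ball z r \<subseteq> t ` {n. z - r \<le> t n \<and> t n \<le> z + r}"
    proof
      fix x assume x: "x \<in> X \<inter> ball z r"
      hence xX: "x \<in> X" and d: "\<bar>x - z\<bar> < r" by (auto simp: dist_real_def dist_commute)
      from xX show "x \<in> t ` {n. z - r \<le> t n \<and> t n \<le> z + r}"
      proof (rule X_cases)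
        fix a assume "x = s a" thus ?thesis using s_bnd[of a] r d by (auto simp: abs_less_iff)
      qed (use r d in \<open>auto intro: rev_image_eqI simp: abs_less_iff\<close>)
    qed
    moreover have "finite {n. z - r \<le> t n \<and> t n \<le> z + r}"
      by (rule smono_fin[OF tm tb tt]) (use r in auto)
    ultimately have "finite (X \<inter> ball z r)" using finite_subset by blast
    thus ?thesis using iso_of_finite r by blast
  qed
qed

lemma countX: "countable X"
  unfolding exX_def by auto

lemma closedX: "closed X"
  unfolding closed_def open_dist
proof
  fix z assume "z \<in> - X"
  hence "z \<notin> {0,1,2}" by auto
  then obtain \<eta> where "\<eta> > 0" "\<forall>x\<in>X. dist x z < \<eta> \<longrightarrow> x = z" using iso by blast
  thus "\<exists>e>0. \<forall>y. dist y z < e \<longrightarrow> y \<in> - X" using \<open>z \<in> - X\<close> by auto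
qed

lemma compactX: "compact X"
proof -
  have "X \<subseteq> {0..2}" using X_bnd by auto
  hence "bounded X" using bounded_subset bounded_closed_interval by blast
  thus ?thesis using closedX compact_eq_bounded_closed by blast
qed


lemma contF: "continuous_on X F"
  unfolding continuous_on_iff
proof (intro ballI allI impI)
  fix x e :: real assume x: "x \<in> X" and e: "e > 0"
  consider "x \<notin> {0,1,2}" | "x = 0" | "x = 1" | "x = 2" by blast
  thus "\<exists>d>0. \<forall>x'\<in>X. dist x' x < d \<longrightarrow> dist (F x') (F x) < e"
  proof cases
    case 1
    then obtain \<eta> where eta: "\<eta> > 0" "\<forall>y\<in>X. dist y x < \<eta> \<longrightarrow> y = x" using iso by blast
    show ?thesis
    proof (intro exI conjI ballI impI)
      show "\<eta> > 0" by (rule eta(1))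
      fix y assume "y \<in> X" "dist y x < \<eta>"
      hence "y = x" using eta(2) by blast
      thus "dist (F y) (F x) < e" using e by simp
    qed
  next
    case 2
    obtain N where N: "\<forall>n\<le>N. s n < e"
      using order_tendstoD(2)[OF sb e] by (auto simp: eventually_at_bot_linorder)
    define d where "d = min 1 (s (N-1))"
    have d: "d > 0" "d \<le> 1" "d \<le> s (N-1)" using s_bnd[of "N-1"] by (auto simp: d_def)
    have "\<forall>y\<in>X. dist y x < d \<longrightarrow> dist (F y) (F x) < e"
    proof (intro ballI impI)
      fix y assume y: "y \<in> X" "dist y x < d"
      hence dy: "\<bar>y\<bar> < d" using 2 by (simp add: dist_real_def)
      from y(1) show "dist (F y) (F x) < e"
      proof (rule X_cases)
        fix a assume ya: "y = s a"
        have "s a < d" using ya dy s_bnd[of a] by simp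
        hence "s a < s (N-1)" using d by linarith
        hence "a + 1 \<le> N" by simp
        hence "s (a+1) < e" using N by blast
        thus ?thesis using ya 2 s_bnd[of "a+1"] F_fix by (simp add: dist_real_def)
      next
        fix a assume ya: "y = t a" thus ?thesis using dy d t_bnd[of a] by auto
      qed (use dy d 2 e F_fix in \<open>auto simp: dist_real_def\<close>)
    qed
    thus ?thesis using d by blast
  next
    case 3
    obtain N where N: "\<forall>n\<le>N. t n < 1 + e"
      using order_tendstoD(2)[OF tb, of "1+e"] e by (auto simp: eventually_at_bot_linorder)
    define d where "d = min e (min 1 (t (N-1) - 1))"
    have d: "d > 0" "d \<le> 1" "d \<le> e" "d \<le> t (N-1) - 1" using t_bnd[of "N-1"] e by (auto simp: d_def min_le_iff_disj)
    have "\<forall>y\<in>X. dist y x < d \<longrightarrow> dist (F y) (F x) < e"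
    proof (intro ballI impI)
      fix y assume y: "y \<in> X" "dist y x < d"
      hence dy: "\<bar>y - 1\<bar> < d" using 3 by (simp add: dist_real_def)
      have F1: "F 1 = 1" using F_fix by simp
      from y(1) show "dist (F y) (F x) < e"
      proof (rule X_cases)
        fix a assume ya: "y = s a"
        have "s a < s (a+1)" by simp
        thus ?thesis using ya 3 F1 s_bnd[of "a+1"] s_bnd[of a] dy d by (simp add: dist_real_def del: s_less)
      next
        fix a assume ya: "y = t a"
        hence "t a - 1 < d" using dy t_bnd[of a] by simp
        hence "t a < t (N-1)" using d by linarith
        hence "a + 1 \<le> N" by simp
        hence "t (a+1) < 1 + e" using N by blast
        thus ?thesis using ya 3 F1 t_bnd[of "a+1"] by (simp add: dist_real_def)
      qed (use dy d 3 e F_fix in \<open>auto simp: dist_real_def\<close>)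
    qed
    thus ?thesis using d by blast
  next
    case 4
    define d where "d = min e 1"
    have d: "d > 0" "d \<le> 1" "d \<le> e" using e by (auto simp: d_def)
    have "\<forall>y\<in>X. dist y x < d \<longrightarrow> dist (F y) (F x) < e"
    proof (intro ballI impI)
      fix y assume y: "y \<in> X" "dist y x < d"
      hence dy: "\<bar>y - 2\<bar> < d" using 4 by (simp add: dist_real_def)
      have F2: "F 2 = 2" using F_fix by simp
      from y(1) show "dist (F y) (F x) < e"
      proof (rule X_cases)
        fix a assume ya: "y = s a"
        thus ?thesis using dy d s_bnd[of a] by auto
      next
        fix a assume ya: "y = t a"
        have "t a < t (a+1)" by simp
        thus ?thesis using ya 4 F2 t_bnd[of "a+1"] t_bnd[of a] dy d by (simp add: dist_real_def del: t_less)
      qed (use dy d 4 e F_fix in \<open>auto simp: dist_real_def\<close>)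
    qed
    thus ?thesis using d by blast
  qed
qed

definition G :: "real \<Rightarrow> real" where
  "G y = (if y \<in> range s then s ((THE n. s n = y) - 1)
                else if y \<in> range t then t ((THE n. t n = y) - 1)
                else y)"

lemma G_fix: "x \<in> {0,1,2} \<Longrightarrow> G x = x"
proof -
  assume "x \<in> {0,1,2}"
  hence "\<forall>n. s n \<noteq> x \<and> t n \<noteq> x" using s_bnd t_bnd by (smt (verit) insertE singletonD)
  thus ?thesis unfolding G_def by auto
qed

lemma G_s: "G (s n) = s (n - 1)"
  unfolding G_def by simp

lemma G_t: "G (t n) = t (n - 1)"
proof -
  have "t n \<notin> range s" using st_ne by (metis imageE)
  moreover have "(THE m. t m = t n) = n" by simp
  ultimately show ?thesis unfolding G_def by simp
qed

lemma GF: "x \<in> X \<Longrightarrow> G (F x) = x"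
proof (erule X_cases)
  fix a assume "x = s a" thus ?thesis by (simp add: G_s)
next
  fix a assume "x = t a" thus ?thesis by (simp add: G_t)
qed (simp_all add: F_fix G_fix)

lemma injF: "inj_on F X"
  by (metis GF inj_onI)

lemma imF: "F ` X = X"
proof
  show "F ` X \<subseteq> X"
  proof
    fix y assume "y \<in> F ` X" then obtain x where x: "x \<in> X" "y = F x" by auto
    from x(1) show "y \<in> X" by (rule X_cases) (simp_all add: x F_fix)
  qed
next
  show "X \<subseteq> F ` X"
  proof
    fix y assume "y \<in> X"
    thus "y \<in> F ` X"
    proof (rule X_cases)
      fix a assume "y = s a"
      moreover have "F (s (a-1)) = s a" by simp
      ultimately show ?thesis using X_s[of "a-1"] by (metis image_eqI)
    next
      fix a assume "y = t a"
      moreover have "F (t (a-1)) = t a" by simp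
      ultimately show ?thesis using X_t[of "a-1"] by (metis image_eqI)
    next
      assume "y = 0" thus ?thesis using F_fix[of 0] X_012 by (metis image_eqI insertI1)
    next
      assume "y = 1" thus ?thesis using F_fix[of 1] X_012 by (metis image_eqI insertI1 insertI2)
    next
      assume "y = 2" thus ?thesis using F_fix[of 2] X_012 by (metis image_eqI insertI1 insertI2)
    qed
  qed
qed

lemma homeo: "\<exists>g. homeomorphism X X F g"
  using homeomorphism_compact[OF compactX contF imF injF] .


lemma pow_s: "(F^^k) (s a) = s (a + int k)"
  by (induction k) (auto simp: add.assoc)
lemma pow_t: "(F^^k) (t a) = t (a + int k)"
  by (induction k) (auto simp: add.assoc)
lemma pow_fix: "x \<in> {0,1,2} \<Longrightarrow> (F^^k) x = x"
  by (induction k) (auto simp: F_fix)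

lemma inv_s: "inv_into X F (s a) = s (a - 1)"
  by (rule inv_into_f_eq[OF injF X_s]) simp
lemma inv_t: "inv_into X F (t a) = t (a - 1)"
  by (rule inv_into_f_eq[OF injF X_t]) simp
lemma inv_fix: "x \<in> {0,1,2} \<Longrightarrow> inv_into X F x = x"
  by (rule inv_into_f_eq[OF injF]) (auto simp: F_fix)

lemma ipow_s: "((inv_into X F)^^k) (s a) = s (a - int k)"
  by (induction k) (auto simp: inv_s algebra_simps)
lemma ipow_t: "((inv_into X F)^^k) (t a) = t (a - int k)"
  by (induction k) (auto simp: inv_t algebra_simps)
lemma ipow_fix: "x \<in> {0,1,2} \<Longrightarrow> ((inv_into X F)^^k) x = x"
  by (induction k) (auto simp: inv_fix)

lemma it_s[simp]: "iter_int X F n (s a) = s (a + n)"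
  by (simp add: iter_int_def pow_s ipow_s)
lemma it_t[simp]: "iter_int X F n (t a) = t (a + n)"
  by (simp add: iter_int_def pow_t ipow_t)
lemma it_fix[simp]: "iter_int X F n 0 = 0" "iter_int X F n 1 = 1" "iter_int X F n 2 = 2"
  by (simp_all add: iter_int_def pow_fix ipow_fix)


lemma expansive: "expansive_on X F"
  unfolding expansive_on_def
proof -
  define e where "e = min (1/4) (min (s 1 - s 0) (t 1 - t 0) / 2)"
  have e: "e > 0" "e \<le> 1/4" "e < s 1 - s 0" "e < t 1 - t 0"
    using s_less[of 0 1] t_less[of 0 1] unfolding e_def by (auto simp: min_def simp del: s_less t_less)
  obtain Ns1 where Ns1: "s Ns1 < 1/2"
    using order_tendstoD(2)[OF sb, of "1/2"] by (auto simp: eventually_at_bot_linorder)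
  obtain Ns2 where Ns2: "s Ns2 > 1/2"
    using order_tendstoD(1)[OF st, of "1/2"] by (auto simp: eventually_at_top_linorder)
  obtain Nt1 where Nt1: "t Nt1 < 3/2"
    using order_tendstoD(2)[OF tb, of "3/2"] by (auto simp: eventually_at_bot_linorder)
  obtain Nt2 where Nt2: "t Nt2 > 3/2"
    using order_tendstoD(1)[OF tt, of "3/2"] by (auto simp: eventually_at_top_linorder)
  define I where "I n x = iter_int X F n x" for n x
  define Q where "Q x y \<longleftrightarrow> ((\<forall>n. dist (I n x) (I n y) \<le> e) \<longrightarrow> x = y)" for x y
  have Qsym: "Q x y \<Longrightarrow> Q y x" for x y unfolding Q_def by (auto simp: dist_commute)
  have ss: "Q (s a) (s b)" if "a \<le> b" for a b
  proof -
    { assume "a < b" and H: "\<forall>n. dist (I n (s a)) (I n (s b)) \<le> e"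
      have "dist (s 0) (s (b - a)) \<le> e" using H[rule_format, of "-a"] by (simp add: I_def)
      moreover have "s 1 \<le> s (b - a)" using \<open>a < b\<close> by simp
      moreover have "s 0 < s 1" by simp
      ultimately have False using e by (simp add: dist_real_def del: s_less s_le t_less t_le) }
    thus ?thesis unfolding Q_def using that by force
  qed
  have tt': "Q (t a) (t b)" if "a \<le> b" for a b
  proof -
    { assume "a < b" and H: "\<forall>n. dist (I n (t a)) (I n (t b)) \<le> e"
      have "dist (t 0) (t (b - a)) \<le> e" using H[rule_format, of "-a"] by (simp add: I_def)
      moreover have "t 1 \<le> t (b - a)" using \<open>a < b\<close> by simp
      moreover have "t 0 < t 1" by simp
      ultimately have False using e by (simp add: dist_real_def del: s_less s_le t_less t_le) }
    thus ?thesis unfolding Q_def using that by force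
  qed
  have st': "Q (s a) (t b)" for a b
  proof -
    { assume H: "\<forall>n. dist (I n (s a)) (I n (t b)) \<le> e"
      have "dist (s (a + (Nt2 - b))) (t Nt2) \<le> e" using H[rule_format, of "Nt2 - b"] by (simp add: I_def)
      hence False using e Nt2 s_bnd[of "a + (Nt2 - b)"] by (simp add: dist_real_def) }
    thus ?thesis unfolding Q_def by force
  qed
  have s0: "Q (s a) 0" for a
  proof -
    { assume H: "\<forall>n. dist (I n (s a)) (I n 0) \<le> e"
      have "dist (s (a + (Ns2 - a))) 0 \<le> e" using H[rule_format, of "Ns2 - a"] by (simp add: I_def)
      hence False using e Ns2 by (simp add: dist_real_def) }
    thus ?thesis unfolding Q_def by force
  qed
  have s1: "Q (s a) 1" for a
  proof -
    { assume H: "\<forall>n. dist (I n (s a)) (I n 1) \<le> e"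
      have "dist (s (a + (Ns1 - a))) 1 \<le> e" using H[rule_format, of "Ns1 - a"] by (simp add: I_def)
      hence False using e Ns1 by (simp add: dist_real_def) }
    thus ?thesis unfolding Q_def by force
  qed
  have s2: "Q (s a) 2" for a
  proof -
    { assume H: "\<forall>n. dist (I n (s a)) (I n 2) \<le> e"
      have "dist (s a) 2 \<le> e" using H[rule_format, of 0] by (simp add: I_def)
      hence False using e s_bnd[of a] by (simp add: dist_real_def) }
    thus ?thesis unfolding Q_def by force
  qed
  have t0: "Q (t a) 0" for a
  proof -
    { assume H: "\<forall>n. dist (I n (t a)) (I n 0) \<le> e"
      have "dist (t a) 0 \<le> e" using H[rule_format, of 0] by (simp add: I_def)
      hence False using e t_bnd[of a] by (simp add: dist_real_def) }
    thus ?thesis unfolding Q_def by force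
  qed
  have t1: "Q (t a) 1" for a
  proof -
    { assume H: "\<forall>n. dist (I n (t a)) (I n 1) \<le> e"
      have "dist (t (a + (Nt2 - a))) 1 \<le> e" using H[rule_format, of "Nt2 - a"] by (simp add: I_def)
      hence False using e Nt2 by (simp add: dist_real_def) }
    thus ?thesis unfolding Q_def by force
  qed
  have t2: "Q (t a) 2" for a
  proof -
    { assume H: "\<forall>n. dist (I n (t a)) (I n 2) \<le> e"
      have "dist (t (a + (Nt1 - a))) 2 \<le> e" using H[rule_format, of "Nt1 - a"] by (simp add: I_def)
      hence False using e Nt1 by (simp add: dist_real_def) }
    thus ?thesis unfolding Q_def by force
  qed
  have ff: "Q x y" if "x \<in> {0,1,2}" "y \<in> {0,1,2}" for x y
  proof -
    { assume H: "\<forall>n. dist (I n x) (I n y) \<le> e" and "x \<noteq> y"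
      have "dist x y \<le> e" using H[rule_format, of 0] by (simp add: I_def iter_int_def)
      hence False using e that \<open>x \<noteq> y\<close> by (auto simp: dist_real_def) }
    thus ?thesis unfolding Q_def by force
  qed
  have QX: "Q x y" if "x \<in> X" "y \<in> X" for x y
  proof -
    have sX: "Q (s a) y" for a
      using that(2)
    proof (rule X_cases)
      fix b assume "y = s b" thus ?thesis using ss[of a b] ss[of b a] Qsym by (cases "a \<le> b") auto
    qed (use st' s0 s1 s2 in auto)
    have tX: "Q (t a) y" for a
      using that(2)
    proof (rule X_cases)
      fix b assume "y = t b" thus ?thesis using tt'[of a b] tt'[of b a] Qsym by (cases "a \<le> b") auto
    qed (use st' t0 t1 t2 Qsym in auto)
    have fX: "Q c y" if "c \<in> {0,1,2}" for c
      using \<open>y \<in> X\<close>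
    proof (rule X_cases)
      fix b assume "y = s b" thus ?thesis using that s0 s1 s2 Qsym by auto
    next
      fix b assume "y = t b" thus ?thesis using that t0 t1 t2 Qsym by auto
    qed (use ff that in auto)
    from that(1) show ?thesis by (rule X_cases) (use sX tX fX in auto)
  qed
  show "\<exists>e>0. \<forall>x\<in>X. \<forall>y\<in>X. (\<forall>n. dist (iter_int X F n x) (iter_int X F n y) \<le> e) \<longrightarrow> x = y"
    using QX e(1) unfolding Q_def I_def by blast
qed


lemma conv:
  assumes xX: "\<forall>i. x i \<in> X" and err: "(\<lambda>i. dist (F (x i)) (x (Suc i))) \<longlonglongrightarrow> 0"
  shows "\<exists>L\<in>{0,1,2}. x \<longlonglongrightarrow> L"
proof -
  have stepineq: "x i - dist (F (x i)) (x (Suc i)) \<le> x (Suc i)" for i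
    using F_ge[OF xX[rule_format, of i]] unfolding dist_real_def by (smt (verit))
  have side: "(\<exists>N. \<forall>i\<ge>N. c < x i) \<or> (\<exists>N. \<forall>i\<ge>N. x i < c)" if cX: "c \<notin> X" for c
  proof -
    have "c \<notin> {0,1,2}" using cX by auto
    then obtain \<eta> where eta: "\<eta> > 0" "\<forall>y\<in>X. dist y c < \<eta> \<longrightarrow> y = c" using iso by blast
    have far: "\<eta> \<le> \<bar>x i - c\<bar>" for i
    proof (rule ccontr)
      assume "\<not> \<eta> \<le> \<bar>x i - c\<bar>"
      hence "x i = c" using eta(2) xX by (auto simp: dist_real_def)
      thus False using xX cX by metis
    qed
    obtain N where N: "\<forall>i\<ge>N. dist (F (x i)) (x (Suc i)) < \<eta>"
      using order_tendstoD(2)[OF err eta(1)] by (auto simp: eventually_sequentially)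
    show ?thesis
    proof (cases "\<exists>i\<ge>N. c < x i")
      case True
      then obtain i0 where i0: "i0 \<ge> N" "c < x i0" by blast
      have "\<forall>j\<ge>i0. c < x j"
      proof (intro allI impI)
        fix j assume "i0 \<le> j"
        thus "c < x j"
        proof (induction j rule: dec_induct)
          case base thus ?case using i0 by simp
        next
          case (step j)
          have "c + \<eta> \<le> x j" using far[of j] step.IH by linarith
          moreover have "dist (F (x j)) (x (Suc j)) < \<eta>" using N step.hyps i0 by simp
          moreover note stepineq[of j]
          ultimately show ?case by linarith
        qed
      qed
      thus ?thesis by blast
    next
      case False
      hence "\<forall>i\<ge>N. x i < c" using xX cX by (metis linorder_neqE_linordered_idom)
      thus ?thesis by blast
    qed
  qed
  have "seq_compact {0..2::real}" by (rule compact_imp_seq_compact) simp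
  moreover have "\<forall>i. x i \<in> {0..2}" using xX X_bnd by auto
  ultimately obtain L r where Lr: "strict_mono r" "(x \<circ> r) \<longlonglongrightarrow> L" using seq_compactE by metis
  have freq: "\<exists>i\<ge>N. \<bar>x i - L\<bar> < \<epsilon>" if eps: "\<epsilon> > 0" for \<epsilon> N
  proof -
    obtain K where K: "\<forall>k\<ge>K. dist ((x \<circ> r) k) L < \<epsilon>"
      using tendstoD[OF Lr(2) eps] by (auto simp: eventually_sequentially)
    have "r (max K N) \<ge> N" using seq_suble[OF Lr(1), of "max K N"] by simp
    moreover have "\<bar>x (r (max K N)) - L\<bar> < \<epsilon>" using K by (simp add: dist_real_def)
    ultimately show ?thesis by blast
  qed
  have below: "\<exists>N. \<forall>i\<ge>N. a < x i" if aL: "a < L" for a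
  proof -
    obtain c where c: "c \<in> {a<..<L}" "c \<notin> X" using real_interval_avoid_countable_set[OF aL countX] by blast
    from side[OF c(2)] show ?thesis
    proof
      assume "\<exists>N. \<forall>i\<ge>N. c < x i" thus ?thesis using c(1) by (meson greaterThanLessThan_iff less_trans)
    next
      assume "\<exists>N. \<forall>i\<ge>N. x i < c"
      then obtain N where N: "\<forall>i\<ge>N. x i < c" by blast
      obtain i where "i \<ge> N" "\<bar>x i - L\<bar> < L - c" using freq[of "L - c" N] c(1) by auto
      thus ?thesis using N by force
    qed
  qed
  have above: "\<exists>N. \<forall>i\<ge>N. x i < b" if bL: "L < b" for b
  proof -
    obtain c where c: "c \<in> {L<..<b}" "c \<notin> X" using real_interval_avoid_countable_set[OF bL countX] by blast
    from side[OF c(2)] show ?thesis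
    proof
      assume "\<exists>N. \<forall>i\<ge>N. x i < c" thus ?thesis using c(1) by (meson greaterThanLessThan_iff less_trans)
    next
      assume "\<exists>N. \<forall>i\<ge>N. c < x i"
      then obtain N where N: "\<forall>i\<ge>N. c < x i" by blast
      obtain i where "i \<ge> N" "\<bar>x i - L\<bar> < c - L" using freq[of "c - L" N] c(1) by auto
      thus ?thesis using N by force
    qed
  qed
  have lim: "x \<longlonglongrightarrow> L"
  proof (rule order_tendstoI)
    fix a assume "a < L" thus "eventually (\<lambda>i. a < x i) sequentially"
      using below by (auto simp: eventually_sequentially)
  next
    fix b assume "L < b" thus "eventually (\<lambda>i. x i < b) sequentially"
      using above by (auto simp: eventually_sequentially)
  qed
  have "L \<in> {0,1,2}"
  proof (rule ccontr)
    assume "L \<notin> {0,1,2}"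
    then obtain \<eta> where eta: "\<eta> > 0" "\<forall>y\<in>X. dist y L < \<eta> \<longrightarrow> y = L" using iso by blast
    obtain N where N: "\<forall>i\<ge>N. dist (x i) L < \<eta>"
      using tendstoD[OF lim eta(1)] by (auto simp: eventually_sequentially)
    have xL: "x i = L" if "i \<ge> N" for i using N eta(2) xX that by blast
    hence LX: "L \<in> X" using xX by (metis order_refl)
    have pos: "F L - L > 0" using F_gt[OF LX \<open>L \<notin> {0,1,2}\<close>] by simp
    obtain M where M: "\<forall>i\<ge>M. dist (F (x i)) (x (Suc i)) < F L - L"
      using order_tendstoD(2)[OF err pos] by (auto simp: eventually_sequentially)
    have "dist (F (x (max M N))) (x (Suc (max M N))) < F L - L" using M by simp
    moreover have "x (max M N) = L" "x (Suc (max M N)) = L" using xL by auto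
    ultimately show False using pos by (simp add: dist_real_def)
  qed
  thus ?thesis using lim by blast
qed

lemma limshad: "limit_shadowing_on X F"
  unfolding limit_shadowing_on_def
proof (intro allI impI)
  fix xs :: "nat \<Rightarrow> real"
  assume "(\<forall>i. xs i \<in> X) \<and> (\<lambda>i. dist (F (xs i)) (xs (Suc i))) \<longlonglongrightarrow> 0"
  then obtain L where L: "L \<in> {0,1,2}" "xs \<longlonglongrightarrow> L" using conv by blast
  have "L \<in> X" using L(1) by auto
  moreover have "(\<lambda>i. dist (xs i) ((F ^^ i) L)) \<longlonglongrightarrow> 0"
    using L tendsto_dist_iff pow_fix by (simp add: tendsto_dist_iff[symmetric])
  ultimately show "\<exists>y\<in>X. (\<lambda>i. dist (xs i) ((F ^^ i) y)) \<longlonglongrightarrow> 0" by blast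
qed


lemma below1: "x \<in> X \<Longrightarrow> x < 1 \<Longrightarrow> (F^^k) x < 1"
proof (erule X_cases)
  fix a assume "x = s a" thus ?thesis using s_bnd by (simp add: pow_s)
next
  fix a assume "x = t a" "x < 1" thus ?thesis using t_bnd[of a] by simp
qed (simp_all add: pow_fix)

lemma noshad: "\<not> shadowing_on X F"
proof
  assume sh: "shadowing_on X F"
  define \<epsilon> where "\<epsilon> = min (1 - s 0) (t 0 - 1) / 2"
  have eps: "\<epsilon> > 0" "\<epsilon> < 1 - s 0" "\<epsilon> < t 0 - 1"
    using s_bnd[of 0] t_bnd[of 0] unfolding \<epsilon>_def by (auto simp: min_def)
  obtain \<delta> where del: "\<delta> > 0" and shd: "\<And>xs. (\<forall>i. xs i \<in> X) \<and> (\<forall>i. dist (F (xs i)) (xs (Suc i)) \<le> \<delta>) \<Longrightarrow>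
      (\<exists>x\<in>X. \<forall>i. dist (xs i) ((F ^^ i) x) \<le> \<epsilon>)"
    using sh eps(1) unfolding shadowing_on_def by metis
  obtain N1 where N1: "\<forall>n\<ge>N1. 1 - \<delta>/2 < s n"
    using order_tendstoD(1)[OF st, of "1 - \<delta>/2"] del by (auto simp: eventually_at_top_linorder)
  obtain N2 where N2: "\<forall>n\<le>N2. t n < 1 + \<delta>/2"
    using order_tendstoD(2)[OF tb, of "1 + \<delta>/2"] del by (auto simp: eventually_at_bot_linorder)
  define p where "p = max N1 1"
  define q where "q = min N2 0"
  have p: "p \<ge> 1" "1 - \<delta>/2 < s p" using N1 by (auto simp: p_def)
  have q: "q \<le> 0" "t q < 1 + \<delta>/2" using N2 by (auto simp: q_def)
  define xs where "xs i = (if int i < p then s (int i) else t (q + int i - p))" for i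
  have xsX: "\<forall>i. xs i \<in> X" by (simp add: xs_def)
  have pseudo: "\<forall>i. dist (F (xs i)) (xs (Suc i)) \<le> \<delta>"
  proof
    fix i
    consider "int i + 1 < p" | "int i + 1 = p" | "int i \<ge> p" by linarith
    thus "dist (F (xs i)) (xs (Suc i)) \<le> \<delta>"
    proof cases
      case 1 thus ?thesis using del by (simp add: xs_def add.commute)
    next
      case 2
      hence "F (xs i) = s p" "xs (Suc i) = t q" by (auto simp: xs_def)
      thus ?thesis using p q s_bnd[of p] t_bnd[of q] by (simp add: dist_real_def)
    next
      case 3 thus ?thesis using del by (simp add: xs_def algebra_simps)
    qed
  qed
  obtain x where x: "x \<in> X" "\<forall>i. dist (xs i) ((F ^^ i) x) \<le> \<epsilon>"
    using shd[of xs] xsX pseudo by blast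
  have "xs 0 = s 0" using p by (simp add: xs_def)
  hence "dist (s 0) x \<le> \<epsilon>" using x(2)[rule_format, of 0] by simp
  hence "x < 1" using eps by (simp add: dist_real_def)
  hence lt: "(F^^k) x < 1" for k using below1 x(1) by blast
  define i where "i = nat (p - q)"
  have "xs i = t 0" using p q by (simp add: xs_def i_def)
  hence "dist (t 0) ((F^^i) x) \<le> \<epsilon>" using x(2)[rule_format, of i] by simp
  thus False using lt[of i] eps by (simp add: dist_real_def)
qed

end

theorem mainTheorem13:
  fixes s t :: "int \<Rightarrow> real"
  assumes "strict_mono s" and "strict_mono t"
    and "(s \<longlongrightarrow> 0) at_bot" and "(s \<longlongrightarrow> 1) at_top"
    and "(t \<longlongrightarrow> 1) at_bot" and "(t \<longlongrightarrow> 2) at_top"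
  shows "(\<exists>g. homeomorphism (exX s t) (exX s t) (exf s t) g)
         \<and> expansive_on (exX s t) (exf s t)
         \<and> limit_shadowing_on (exX s t) (exf s t)
         \<and> \<not> shadowing_on (exX s t) (exf s t)"
proof -
  interpret exsys s t using assms by unfold_locales
  show ?thesis using homeo expansive limshad noshad by blast
qed

end
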